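(* Let $k$ be an $\mathbf{F}_p$-algebra, $m\in\mathbf{N}\cup\{\infty\}$, and $A:=k[[\pi]]/(\pi^{m+1})$. The function $\phi:A\to\operatorname{HS}^m(k)[[\pi]]/(\pi^{m+1})$ defined by $$\phi\Big(\sum_{i=0}^ma_i\pi^i\Big):=\sum_{n=0}^m\sum_{i=0}^nd^{[n-i]}a_i\,\pi^n\qquad(a_i\in k)$$ is a ring homomorphism.
   Context: For a ring $R$ and $m\in\mathbf{N}\cup\{\infty\}$, $\operatorname{HS}^m(R):=\mathbf{Z}[d^{[n]}a\mid a\in R,0\le n\le m]/\sim$, where $\sim$ is generated by the relations $d^{[n]}(a+b)=d^{[n]}a+d^{[n]}b$, $d^{[n]}(ab)=\sum_{i+j=n}d^{[i]}a\,d^{[j]}b$, and $d^{[0]}1=1$. Here $\pi^{\infty+1}:=0$, so for $m=\infty$ the rings are ordinary power series rings. *)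

theory Defs
  imports "HOL-Algebra.Algebra" "HOL-Library.Poly_Mapping" "HOL-Library.Extended_Nat" "HOL-Computational_Algebra.Primes"
begin

definition tcring :: "('a::comm_ring_1) ring" where
  "tcring = \<lparr>carrier = UNIV, monoid.mult = (*), one = 1, ring.zero = 0, ring.add = (+)\<rparr>"

text \<open>Truncated power series R[[pi]]/(pi^(m+1)), m an extended natural
  (m = \<infinity> gives ordinary power series).  Elements are coefficient sequences
  which vanish beyond index m.\<close>
definition trunc_ps :: "('a, 'b) ring_scheme \<Rightarrow> enat \<Rightarrow> (nat \<Rightarrow> 'a) ring" where
  "trunc_ps R m =
    \<lparr>carrier = {f. (\<forall>n. f n \<in> carrier R) \<and> (\<forall>n. \<not> enat n \<le> m \<longrightarrow> f n = \<zero>\<^bsub>R\<^esub>)},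
     monoid.mult = (\<lambda>f g n. if enat n \<le> m
                      then (\<Oplus>\<^bsub>R\<^esub> i\<in>{..n}. f i \<otimes>\<^bsub>R\<^esub> g (n - i)) else \<zero>\<^bsub>R\<^esub>),
     one = (\<lambda>n. if n = 0 then \<one>\<^bsub>R\<^esub> else \<zero>\<^bsub>R\<^esub>),
     ring.zero = (\<lambda>n. \<zero>\<^bsub>R\<^esub>),
     ring.add = (\<lambda>f g n. if enat n \<le> m then f n \<oplus>\<^bsub>R\<^esub> g n else \<zero>\<^bsub>R\<^esub>)\<rparr>"

text \<open>Polynomials over Z in the variables d^[n] a (a \<in> k, n \<in> N); a variable is
  a pair (a, n), a monomial a finitely supported exponent map.\<close>
type_synonym 'k hs_poly = "(('k \<times> nat) \<Rightarrow>\<^sub>0 nat) \<Rightarrow>\<^sub>0 int"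

definition hsvar :: "nat \<Rightarrow> 'k \<Rightarrow> 'k hs_poly" where
  "hsvar n a = Poly_Mapping.single (Poly_Mapping.single (a, n) 1) 1"

definition hs_poly_ring :: "enat \<Rightarrow> 'k hs_poly ring" where
  "hs_poly_ring m =
    \<lparr>carrier = {p. \<forall>mon \<in> Poly_Mapping.keys p. \<forall>v \<in> Poly_Mapping.keys mon. enat (snd v) \<le> m},
     monoid.mult = (*), one = 1, ring.zero = 0, ring.add = (+)\<rparr>"

definition hs_rel :: "enat \<Rightarrow> ('k::comm_ring_1) hs_poly set" where
  "hs_rel m =
     {hsvar n (a + b) - hsvar n a - hsvar n b | a b n. enat n \<le> m}
   \<union> {hsvar n (a * b) - (\<Sum>i\<le>n. hsvar i a * hsvar (n - i) b) | a b n. enat n \<le> m}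
   \<union> {hsvar 0 1 - 1}"

definition HS :: "enat \<Rightarrow> ('k::comm_ring_1) hs_poly set ring" where
  "HS m = hs_poly_ring m Quot genideal (hs_poly_ring m) (hs_rel m)"

definition hs_phi :: "enat \<Rightarrow> (nat \<Rightarrow> 'k::comm_ring_1) \<Rightarrow> nat \<Rightarrow> 'k hs_poly set" where
  "hs_phi m a = (\<lambda>n. if enat n \<le> m
      then genideal (hs_poly_ring m) (hs_rel m) +>\<^bsub>hs_poly_ring m\<^esub> (\<Sum>i\<le>n. hsvar (n - i) (a i))
      else \<zero>\<^bsub>HS m\<^esub>)"

end

theory Submission
  imports Defs
begin

lemma hs_carrier_iff:
  "p \<in> carrier (hs_poly_ring m) \<longleftrightarrow> (\<forall>mon \<in> Poly_Mapping.keys p. \<forall>v \<in> Poly_Mapping.keys mon. enat (snd v) \<le> m)"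
  by (simp add: hs_poly_ring_def)

lemma hs_add_closed:
  assumes "p \<in> carrier (hs_poly_ring m)" "q \<in> carrier (hs_poly_ring m)"
  shows "p + q \<in> carrier (hs_poly_ring m)"
  using assms keys_add[of p q] unfolding hs_carrier_iff by blast

lemma hs_mult_closed:
  assumes "p \<in> carrier (hs_poly_ring m)" "q \<in> carrier (hs_poly_ring m)"
  shows "p * q \<in> carrier (hs_poly_ring m)"
  unfolding hs_carrier_iff
proof (intro ballI)
  fix mon v assume mon: "mon \<in> Poly_Mapping.keys (p * q)" and v: "v \<in> Poly_Mapping.keys mon"
  from mon keys_mult[of p q] obtain a b where ab: "mon = a + b" "a \<in> Poly_Mapping.keys p" "b \<in> Poly_Mapping.keys q"
    by blast
  from v ab keys_add[of a b] have "v \<in> Poly_Mapping.keys a \<or> v \<in> Poly_Mapping.keys b" by blast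
  then show "enat (snd v) \<le> m" using assms ab unfolding hs_carrier_iff by blast
qed

lemma hs_uminus_closed:
  assumes "p \<in> carrier (hs_poly_ring m)"
  shows "- p \<in> carrier (hs_poly_ring m)"
  using assms unfolding hs_carrier_iff by simp

lemma hs_zero_closed: "0 \<in> carrier (hs_poly_ring m)"
  unfolding hs_carrier_iff by simp

lemma hs_one_closed: "1 \<in> carrier (hs_poly_ring m)"
  unfolding hs_carrier_iff by simp

lemma hs_diff_closed:
  assumes "p \<in> carrier (hs_poly_ring m)" "q \<in> carrier (hs_poly_ring m)"
  shows "p - q \<in> carrier (hs_poly_ring m)"
  using hs_add_closed[OF assms(1) hs_uminus_closed[OF assms(2)]] by simp

lemma hs_sum_closed:
  assumes "\<And>i. i \<in> A \<Longrightarrow> f i \<in> carrier (hs_poly_ring m)"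
  shows "sum f A \<in> carrier (hs_poly_ring m)"
  using assms
proof (induction A rule: infinite_finite_induct)
  case (infinite A) then show ?case by (simp add: hs_zero_closed)
next
  case empty then show ?case by (simp add: hs_zero_closed)
next
  case (insert x F) then show ?case by (simp add: hs_add_closed)
qed

lemma hsvar_closed: "enat n \<le> m \<Longrightarrow> hsvar n a \<in> carrier (hs_poly_ring m)"
  unfolding hs_carrier_iff hsvar_def by simp

lemma hs_ops [simp]:
  "a \<oplus>\<^bsub>hs_poly_ring m\<^esub> b = a + b" "a \<otimes>\<^bsub>hs_poly_ring m\<^esub> b = a * b"
  "\<zero>\<^bsub>hs_poly_ring m\<^esub> = 0" "\<one>\<^bsub>hs_poly_ring m\<^esub> = 1"
  by (simp_all add: hs_poly_ring_def)

lemma tc_ops [simp]: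
  "a \<oplus>\<^bsub>(tcring :: 'a::comm_ring_1 ring)\<^esub> b = a + b" "a \<otimes>\<^bsub>(tcring :: 'a ring)\<^esub> b = a * b"
  "\<zero>\<^bsub>(tcring :: 'a ring)\<^esub> = 0" "\<one>\<^bsub>(tcring :: 'a ring)\<^esub> = 1" "carrier (tcring :: 'a ring) = UNIV"
  by (simp_all add: tcring_def)

lemma hs_cring: "cring (hs_poly_ring m)"
proof (rule cringI)
  show "abelian_group (hs_poly_ring m)"
  proof (rule abelian_groupI)
    fix x assume "x \<in> carrier (hs_poly_ring m)"
    then show "\<exists>y\<in>carrier (hs_poly_ring m). y \<oplus>\<^bsub>hs_poly_ring m\<^esub> x = \<zero>\<^bsub>hs_poly_ring m\<^esub>"
      by (intro bexI[of _ "-x"]) (simp_all add: hs_uminus_closed)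
  qed (simp_all add: hs_add_closed hs_zero_closed algebra_simps)
  show "comm_monoid (hs_poly_ring m)"
    by (rule comm_monoidI) (simp_all add: hs_mult_closed hs_one_closed algebra_simps)
qed (simp add: algebra_simps)

lemma tc_cring: "cring (tcring :: 'a::comm_ring_1 ring)"
proof (rule cringI)
  show "abelian_group (tcring :: 'a ring)"
  proof (rule abelian_groupI)
    fix x :: 'a
    show "\<exists>y\<in>carrier (tcring :: 'a ring). y \<oplus>\<^bsub>(tcring :: 'a ring)\<^esub> x = \<zero>\<^bsub>(tcring :: 'a ring)\<^esub>"
      by (intro bexI[of _ "-x"]) simp_all
  qed (simp_all add: algebra_simps)
  show "comm_monoid (tcring :: 'a ring)"
    by (rule comm_monoidI) (simp_all add: algebra_simps)
qed (simp add: algebra_simps)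

lemma tc_finsum: "finite A \<Longrightarrow> finsum (tcring :: 'a::comm_ring_1 ring) f A = sum f A"
proof (induction A rule: finite_induct)
  case empty
  interpret cring "tcring :: 'a ring" by (rule tc_cring)
  show ?case by simp
next
  case (insert x F)
  interpret cring "tcring :: 'a ring" by (rule tc_cring)
  from insert show ?case by (simp add: finsum_insert)
qed

lemma hs_finsum: "finite A \<Longrightarrow> (\<And>i. i \<in> A \<Longrightarrow> f i \<in> carrier (hs_poly_ring m)) \<Longrightarrow>
   finsum (hs_poly_ring m) f A = sum f A"
proof (induction A rule: finite_induct)
  case empty
  interpret cring "hs_poly_ring m" by (rule hs_cring)
  show ?case by simp
next
  case (insert x F)
  interpret cring "hs_poly_ring m" by (rule hs_cring)
  from insert show ?case by (simp add: finsum_insert Pi_def)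
qed


definition hsI :: "enat \<Rightarrow> ('k::comm_ring_1) hs_poly set" where
  "hsI m = genideal (hs_poly_ring m) (hs_rel m)"

definition hsh :: "enat \<Rightarrow> ('k::comm_ring_1) hs_poly \<Rightarrow> 'k hs_poly set" where
  "hsh m x = hsI m +>\<^bsub>hs_poly_ring m\<^esub> x"

lemma enat_le_trans: "i \<le> n \<Longrightarrow> enat n \<le> m \<Longrightarrow> enat i \<le> m"
  by (meson enat_ord_simps(1) order_trans)

lemma enat_le_trans': "enat n \<le> m \<Longrightarrow> enat (n - i) \<le> m"
  by (rule enat_le_trans[of _ n]) auto

lemma hs_rel_sub: "hs_rel m \<subseteq> carrier (hs_poly_ring m)"
proof -
  have 1: "(\<Sum>i\<le>n. hsvar i a * hsvar (n - i) b) \<in> carrier (hs_poly_ring m)" if "enat n \<le> m" for n a b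
    using that by (intro hs_sum_closed hs_mult_closed hsvar_closed) (auto intro: enat_le_trans enat_le_trans')
  show ?thesis unfolding hs_rel_def
    by (auto intro!: hs_diff_closed hsvar_closed 1 hs_one_closed simp: zero_enat_def[symmetric])
qed

lemma hsI_ideal: "ideal (hsI m) (hs_poly_ring m)"
  unfolding hsI_def
  by (rule ring.genideal_ideal[OF cring.axioms(1)[OF hs_cring] hs_rel_sub])

lemma hsh_hom: "ring_hom_cring (hs_poly_ring m) (HS m) (hsh m)"
proof -
  have "hsh m = (+>\<^bsub>hs_poly_ring m\<^esub>) (hsI m)" by (simp add: hsh_def fun_eq_iff)
  then show ?thesis
    unfolding HS_def hsI_def[symmetric]
    by (subst \<open>hsh m = _\<close>) (rule ideal.rcos_ring_hom_cring[OF hsI_ideal[of m] hs_cring[of m]])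
qed

lemma HS_cring: "cring (HS m)"
  using hsh_hom ring_hom_cring.axioms(2) by blast

lemma hsh_carrier: "x \<in> carrier (hs_poly_ring m) \<Longrightarrow> hsh m x \<in> carrier (HS m)"
proof -
  interpret ring_hom_cring "hs_poly_ring m" "HS m" "hsh m" by (rule hsh_hom)
  show "x \<in> carrier (hs_poly_ring m) \<Longrightarrow> hsh m x \<in> carrier (HS m)" by simp
qed

lemma hsh_add: "x \<in> carrier (hs_poly_ring m) \<Longrightarrow> y \<in> carrier (hs_poly_ring m) \<Longrightarrow>
    hsh m (x + y) = hsh m x \<oplus>\<^bsub>HS m\<^esub> hsh m y"
proof -
  interpret ring_hom_cring "hs_poly_ring m" "HS m" "hsh m" by (rule hsh_hom)
  show "x \<in> carrier (hs_poly_ring m) \<Longrightarrow> y \<in> carrier (hs_poly_ring m) \<Longrightarrow>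
    hsh m (x + y) = hsh m x \<oplus>\<^bsub>HS m\<^esub> hsh m y" using hom_add[of x y] by simp
qed

lemma hsh_mult: "x \<in> carrier (hs_poly_ring m) \<Longrightarrow> y \<in> carrier (hs_poly_ring m) \<Longrightarrow>
    hsh m (x * y) = hsh m x \<otimes>\<^bsub>HS m\<^esub> hsh m y"
proof -
  interpret ring_hom_cring "hs_poly_ring m" "HS m" "hsh m" by (rule hsh_hom)
  show "x \<in> carrier (hs_poly_ring m) \<Longrightarrow> y \<in> carrier (hs_poly_ring m) \<Longrightarrow>
    hsh m (x * y) = hsh m x \<otimes>\<^bsub>HS m\<^esub> hsh m y" using hom_mult[of x y] by simp
qed

lemma hsh_one: "hsh m 1 = \<one>\<^bsub>HS m\<^esub>"
proof -
  interpret ring_hom_cring "hs_poly_ring m" "HS m" "hsh m" by (rule hsh_hom)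
  show ?thesis using hom_one by simp
qed

lemma hsh_zero: "hsh m 0 = \<zero>\<^bsub>HS m\<^esub>"
proof -
  interpret ring_hom_cring "hs_poly_ring m" "HS m" "hsh m" by (rule hsh_hom)
  show ?thesis using hom_zero by simp
qed

lemma hsh_in_I: "x \<in> hsI m \<Longrightarrow> hsh m x = \<zero>\<^bsub>HS m\<^esub>"
  unfolding hsh_def HS_def hsI_def[symmetric]
  by (simp add: FactRing_def abelian_subgroup.a_rcos_const[OF ideal.axioms(1)[OF hsI_ideal, THEN abelian_subgroupI3]]
      ideal.axioms(2)[OF hsI_ideal, THEN ring.is_abelian_group])

lemma hsh_eqI:
  assumes "x \<in> carrier (hs_poly_ring m)" "y \<in> carrier (hs_poly_ring m)" "x - y \<in> hsI m"
  shows "hsh m x = hsh m y"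
proof -
  interpret S: cring "HS m" by (rule HS_cring)
  have "hsh m (y + (x - y)) = hsh m y \<oplus>\<^bsub>HS m\<^esub> hsh m (x - y)"
    by (rule hsh_add) (use assms in \<open>simp_all add: hs_diff_closed\<close>)
  then have "hsh m x = hsh m y \<oplus>\<^bsub>HS m\<^esub> hsh m (x - y)" by simp
  also have "\<dots> = hsh m y" using assms by (simp add: hsh_in_I hsh_carrier)
  finally show ?thesis .
qed

lemma hsh_rel: "r \<in> hs_rel m \<Longrightarrow> r \<in> hsI m"
  unfolding hsI_def using ring.genideal_self[OF cring.axioms(1)[OF hs_cring] hs_rel_sub] by blast

lemma hsh_sum:
  assumes "finite A" "\<And>i. i \<in> A \<Longrightarrow> f i \<in> carrier (hs_poly_ring m)"
  shows "hsh m (sum f A) = finsum (HS m) (\<lambda>i. hsh m (f i)) A"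
proof -
  interpret ring_hom_cring "hs_poly_ring m" "HS m" "hsh m" by (rule hsh_hom)
  have "hsh m (sum f A) = hsh m (finsum (hs_poly_ring m) f A)" using assms by (simp add: hs_finsum)
  also have "\<dots> = finsum (HS m) (\<lambda>i. hsh m (f i)) A"
    using assms by (simp add: Pi_def o_def)
  finally show ?thesis .
qed

lemma hsh_sum_cong:
  assumes "finite A" "\<And>i. i \<in> A \<Longrightarrow> f i \<in> carrier (hs_poly_ring m)"
    "\<And>i. i \<in> A \<Longrightarrow> g i \<in> carrier (hs_poly_ring m)" "\<And>i. i \<in> A \<Longrightarrow> hsh m (f i) = hsh m (g i)"
  shows "hsh m (sum f A) = hsh m (sum g A)"
  using assms
proof (induction A rule: finite_induct)
  case empty then show ?case by simp
next
  case (insert x F)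
  then show ?case by (simp add: hsh_add hs_sum_closed)
qed

lemma hsvar_add:
  assumes "enat k \<le> m"
  shows "hsh m (hsvar k (x + y)) = hsh m (hsvar k x + hsvar k y)"
  using assms
  by (intro hsh_eqI hsvar_closed hs_add_closed hsh_rel) (auto simp: hs_rel_def algebra_simps)

lemma hsvar_mult:
  assumes "enat k \<le> m"
  shows "hsh m (hsvar k (x * y)) = hsh m (\<Sum>i\<le>k. hsvar i x * hsvar (k - i) y)"
proof -
  have 1: "(\<Sum>i\<le>k. hsvar i x * hsvar (k - i) y) \<in> carrier (hs_poly_ring m)"
    using assms by (intro hs_sum_closed hs_mult_closed hsvar_closed) (auto intro: enat_le_trans enat_le_trans')
  show ?thesis using assms
    by (intro hsh_eqI hsvar_closed 1 hsh_rel) (auto simp: hs_rel_def)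
qed

lemma hsvar_01: "hsh m (hsvar 0 (1::'k::comm_ring_1)) = hsh m 1"
  by (intro hsh_eqI hsvar_closed hs_one_closed hsh_rel) (auto simp: hs_rel_def zero_enat_def[symmetric])

lemma hsvar_zero:
  assumes "enat k \<le> m"
  shows "hsh m (hsvar k (0::'k::comm_ring_1)) = \<zero>\<^bsub>HS m\<^esub>"
proof -
  interpret S: cring "HS m" by (rule HS_cring)
  have c: "hsh m (hsvar k (0::'k)) \<in> carrier (HS m)" using assms by (simp add: hsh_carrier hsvar_closed)
  have "hsh m (hsvar k (0::'k)) = hsh m (hsvar k 0 + hsvar k 0)" using hsvar_add[OF assms, of 0 0] by simp
  also have "\<dots> = hsh m (hsvar k (0::'k)) \<oplus>\<^bsub>HS m\<^esub> hsh m (hsvar k 0)"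
    by (rule hsh_add) (use assms in \<open>simp_all add: hsvar_closed\<close>)
  finally show ?thesis using c by simp
qed

lemma hsvar_sum:
  assumes "finite J" "enat k \<le> m"
  shows "hsh m (hsvar k (sum (x :: _ \<Rightarrow> 'k::comm_ring_1) J)) = hsh m (\<Sum>j\<in>J. hsvar k (x j))"
  using assms(1)
proof (induction J rule: finite_induct)
  case empty
  then show ?case using assms by (simp add: hsvar_zero hsh_zero)
next
  case (insert a F)
  have c1: "(\<Sum>j\<in>F. hsvar k (x j)) \<in> carrier (hs_poly_ring m)"
    using assms by (intro hs_sum_closed hsvar_closed)
  have "hsh m (hsvar k (sum x (insert a F))) = hsh m (hsvar k (x a) + hsvar k (sum x F))"
    using insert assms by (simp add: hsvar_add)
  also have "\<dots> = hsh m (hsvar k (x a)) \<oplus>\<^bsub>HS m\<^esub> hsh m (hsvar k (sum x F))"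
    using assms by (simp add: hsh_add hsvar_closed)
  also have "\<dots> = hsh m (hsvar k (x a)) \<oplus>\<^bsub>HS m\<^esub> hsh m (\<Sum>j\<in>F. hsvar k (x j))"
    using insert by simp
  also have "\<dots> = hsh m (hsvar k (x a) + (\<Sum>j\<in>F. hsvar k (x j)))"
    using assms c1 by (simp add: hsh_add hsvar_closed)
  also have "\<dots> = hsh m (\<Sum>j\<in>insert a F. hsvar k (x j))" using insert by simp
  finally show ?case .
qed

lemma hsvar_one:
  assumes "enat n \<le> m"
  shows "hsh m (hsvar n (1::'k::comm_ring_1)) = (if n = 0 then \<one>\<^bsub>HS m\<^esub> else \<zero>\<^bsub>HS m\<^esub>)"
  using assms
proof (induction n rule: less_induct)
  case (less n)
  interpret S: cring "HS m" by (rule HS_cring)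
  show ?case
  proof (cases "n = 0")
    case True
    then show ?thesis by (simp add: hsvar_01 hsh_one)
  next
    case False
    define D where "D = hsh m (hsvar n (1::'k))"
    have Dc: "D \<in> carrier (HS m)" unfolding D_def using less by (simp add: hsh_carrier hsvar_closed)
    have c: "\<And>i. i \<le> n \<Longrightarrow> hsvar i (1::'k) * hsvar (n - i) 1 \<in> carrier (hs_poly_ring m)"
      using less.prems by (intro hs_mult_closed hsvar_closed) (auto intro: enat_le_trans enat_le_trans')
    have split: "{..n} = insert 0 (insert n {1..<n})" using False by auto
    have mid: "hsh m (\<Sum>i\<in>{1..<n}. hsvar i (1::'k) * hsvar (n - i) 1) = hsh m (\<Sum>i\<in>{1..<n}. 0)"
    proof (rule hsh_sum_cong)
      fix i assume i: "i \<in> {1..<n}"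
      then have "hsh m (hsvar i (1::'k)) = \<zero>\<^bsub>HS m\<^esub>"
        using less.IH[of i] less.prems enat_le_trans[of i n m] by simp
      moreover have "hsvar i (1::'k) \<in> carrier (hs_poly_ring m)" "hsvar (n - i) (1::'k) \<in> carrier (hs_poly_ring m)"
        using i less.prems enat_le_trans[of i n m] enat_le_trans'[of n m i] by (simp_all add: hsvar_closed)
      ultimately show "hsh m (hsvar i (1::'k) * hsvar (n - i) 1) = hsh m 0"
        by (simp add: hsh_mult hsh_carrier hsh_zero)
    qed (use c in \<open>auto simp: hs_zero_closed\<close>)
    have "D = hsh m (hsvar n (1 * 1::'k))" by (simp add: D_def)
    also have "\<dots> = hsh m (\<Sum>i\<le>n. hsvar i (1::'k) * hsvar (n - i) 1)"
      using less.prems by (rule hsvar_mult)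
    also have "\<dots> = hsh m (hsvar 0 (1::'k) * hsvar n 1 + (hsvar n 1 * hsvar 0 1 +
        (\<Sum>i\<in>{1..<n}. hsvar i (1::'k) * hsvar (n - i) 1)))"
      unfolding split using False by simp
    also have "\<dots> = hsh m (hsvar 0 (1::'k)) \<otimes>\<^bsub>HS m\<^esub> D \<oplus>\<^bsub>HS m\<^esub>
        (D \<otimes>\<^bsub>HS m\<^esub> hsh m (hsvar 0 (1::'k)) \<oplus>\<^bsub>HS m\<^esub> hsh m (\<Sum>i\<in>{1..<n}. 0))"
    proof -
      have c0: "hsvar 0 (1::'k) \<in> carrier (hs_poly_ring m)" by (simp add: hsvar_closed zero_enat_def[symmetric])
      have cn: "hsvar n (1::'k) \<in> carrier (hs_poly_ring m)" using less.prems by (simp add: hsvar_closed)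
      have cM: "(\<Sum>i\<in>{1..<n}. hsvar i (1::'k) * hsvar (n - i) 1) \<in> carrier (hs_poly_ring m)"
        using c by (intro hs_sum_closed) auto
      show ?thesis using c0 cn cM unfolding D_def mid[symmetric]
        by (simp only: hsh_add hsh_mult hs_add_closed hs_mult_closed)
    qed
    also have "\<dots> = D \<oplus>\<^bsub>HS m\<^esub> D"
      using Dc by (simp add: hsvar_01 hsh_one hsh_zero)
    finally have "D = D \<oplus>\<^bsub>HS m\<^esub> D" .
    then have "D = \<zero>\<^bsub>HS m\<^esub>" using Dc by simp
    then show ?thesis using False by (simp add: D_def)
  qed
qed

lemma triple_swap:
  fixes ff :: "nat \<Rightarrow> nat \<Rightarrow> nat \<Rightarrow> 'a::comm_monoid_add"
  shows "(\<Sum>(j,l)\<in>{(j,l). j + l \<le> n}. \<Sum>t\<le>n - (j + l). ff j l t) =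
         (\<Sum>(j,t)\<in>{(j,t). j + t \<le> n}. \<Sum>l\<le>n - (j + t). ff j l t)"
proof -
  have fin: "finite {(j, l). j + l \<le> (n::nat)}"
    by (rule finite_subset[of _ "{..n} \<times> {..n}"]) auto
  have fin': "finite {p. fst p + snd p \<le> (n::nat)}"
    using fin by (simp add: case_prod_beta')
  have "(\<Sum>(j,l)\<in>{(j,l). j + l \<le> n}. \<Sum>t\<le>n - (j + l). ff j l t) =
        (\<Sum>((j,l),t)\<in>Sigma {(j,l). j + l \<le> n} (\<lambda>(j,l). {..n - (j + l)}). ff j l t)"
    by (subst sum.Sigma[symmetric]) (auto simp: fin fin' split_def)
  also have "\<dots> = (\<Sum>((j,t),l)\<in>Sigma {(j,t). j + t \<le> n} (\<lambda>(j,t). {..n - (j + t)}). ff j l t)"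
    by (rule sum.reindex_bij_witness[where i="\<lambda>((j,t),l). ((j,l),t)" and j="\<lambda>((j,l),t). ((j,t),l)"]) auto
  also have "\<dots> = (\<Sum>(j,t)\<in>{(j,t). j + t \<le> n}. \<Sum>l\<le>n - (j + t). ff j l t)"
    by (subst sum.Sigma[symmetric]) (auto simp: fin fin' split_def)
  finally show ?thesis .
qed

lemma triple_sum:
  fixes ff :: "nat \<Rightarrow> nat \<Rightarrow> nat \<Rightarrow> 'a::comm_monoid_add"
  shows "(\<Sum>s\<le>n. \<Sum>j\<le>s. \<Sum>t\<le>n - s. ff j (s - j) t) = (\<Sum>i\<le>n. \<Sum>j\<le>i. \<Sum>l\<le>n - i. ff j l (i - j))"
proof -
  have "(\<Sum>s\<le>n. \<Sum>j\<le>s. \<Sum>t\<le>n - s. ff j (s - j) t) =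
        (\<Sum>s\<le>n. \<Sum>j\<le>s. (\<lambda>j l. \<Sum>t\<le>n - (j + l). ff j l t) j (s - j))"
    by (intro sum.cong refl) auto
  also have "\<dots> = (\<Sum>(j,l)\<in>{(j,l). j + l \<le> n}. \<Sum>t\<le>n - (j + l). ff j l t)"
    by (rule sum.triangle_reindex_eq[symmetric])
  also have "\<dots> = (\<Sum>(j,t)\<in>{(j,t). j + t \<le> n}. \<Sum>l\<le>n - (j + t). ff j l t)"
    by (rule triple_swap)
  also have "\<dots> = (\<Sum>i\<le>n. \<Sum>j\<le>i. (\<lambda>j t. \<Sum>l\<le>n - (j + t). ff j l t) j (i - j))"
    by (rule sum.triangle_reindex_eq)
  also have "\<dots> = (\<Sum>i\<le>n. \<Sum>j\<le>i. \<Sum>l\<le>n - i. ff j l (i - j))"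
    by (intro sum.cong refl) auto
  finally show ?thesis .
qed

lemma trunc_ps_simps:
  "carrier (trunc_ps R m) = {f. (\<forall>n. f n \<in> carrier R) \<and> (\<forall>n. \<not> enat n \<le> m \<longrightarrow> f n = \<zero>\<^bsub>R\<^esub>)}"
  "f \<otimes>\<^bsub>trunc_ps R m\<^esub> g = (\<lambda>n. if enat n \<le> m then (\<Oplus>\<^bsub>R\<^esub> i\<in>{..n}. f i \<otimes>\<^bsub>R\<^esub> g (n - i)) else \<zero>\<^bsub>R\<^esub>)"
  "\<one>\<^bsub>trunc_ps R m\<^esub> = (\<lambda>n. if n = 0 then \<one>\<^bsub>R\<^esub> else \<zero>\<^bsub>R\<^esub>)"
  "f \<oplus>\<^bsub>trunc_ps R m\<^esub> g = (\<lambda>n. if enat n \<le> m then f n \<oplus>\<^bsub>R\<^esub> g n else \<zero>\<^bsub>R\<^esub>)"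
  by (simp_all add: trunc_ps_def)

lemma phi_val: "enat n \<le> m \<Longrightarrow> hs_phi m a n = hsh m (\<Sum>i\<le>n. hsvar (n - i) (a i))"
  by (simp add: hs_phi_def hsh_def hsI_def)

lemma phi_out: "\<not> enat n \<le> m \<Longrightarrow> hs_phi m a n = \<zero>\<^bsub>HS m\<^esub>"
  by (simp add: hs_phi_def)

lemma A_closed: "enat n \<le> m \<Longrightarrow> (\<Sum>i\<le>n. hsvar (n - i) (a i)) \<in> carrier (hs_poly_ring m)"
  by (intro hs_sum_closed hsvar_closed enat_le_trans')

lemma phi_add:
  assumes n: "enat n \<le> m"
  shows "hsh m (\<Sum>i\<le>n. hsvar (n - i) ((x::nat \<Rightarrow> 'k::comm_ring_1) i + y i)) =
         hsh m (\<Sum>i\<le>n. hsvar (n - i) (x i)) \<oplus>\<^bsub>HS m\<^esub> hsh m (\<Sum>i\<le>n. hsvar (n - i) (y i))"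
proof -
  have "hsh m (\<Sum>i\<le>n. hsvar (n - i) (x i + y i)) =
        hsh m (\<Sum>i\<le>n. hsvar (n - i) (x i) + hsvar (n - i) (y i))"
    using n by (intro hsh_sum_cong hsvar_add hsvar_closed hs_add_closed enat_le_trans') auto
  also have "\<dots> = hsh m ((\<Sum>i\<le>n. hsvar (n - i) (x i)) + (\<Sum>i\<le>n. hsvar (n - i) (y i)))"
    by (simp add: sum.distrib)
  also have "\<dots> = hsh m (\<Sum>i\<le>n. hsvar (n - i) (x i)) \<oplus>\<^bsub>HS m\<^esub> hsh m (\<Sum>i\<le>n. hsvar (n - i) (y i))"
    using n by (intro hsh_add A_closed)
  finally show ?thesis .
qed

lemma phi_one:
  assumes n: "enat n \<le> m"
  shows "hsh m (\<Sum>i\<le>n. hsvar (n - i) (if i = 0 then (1::'k::comm_ring_1) else 0)) =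
         (if n = 0 then \<one>\<^bsub>HS m\<^esub> else \<zero>\<^bsub>HS m\<^esub>)"
proof -
  have "hsh m (\<Sum>i\<le>n. hsvar (n - i) (if i = 0 then (1::'k) else 0)) =
        hsh m (\<Sum>i\<le>n. if i = 0 then hsvar n (1::'k) else 0)"
  proof (rule hsh_sum_cong)
    fix i assume i: "i \<in> {..n}"
    show "hsvar (n - i) (if i = 0 then (1::'k) else 0) \<in> carrier (hs_poly_ring m)"
      using n by (intro hsvar_closed enat_le_trans')
    show "(if i = 0 then hsvar n (1::'k) else 0) \<in> carrier (hs_poly_ring m)"
      using n by (simp add: hsvar_closed hs_zero_closed)
    show "hsh m (hsvar (n - i) (if i = 0 then (1::'k) else 0)) = hsh m (if i = 0 then hsvar n 1 else 0)"
      using n enat_le_trans'[OF n, of i] by (simp add: hsvar_zero hsh_zero)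
  qed simp
  also have "(\<Sum>i\<le>n. if i = 0 then hsvar n (1::'k) else 0) = hsvar n 1"
    by (simp add: sum.delta)
  finally show ?thesis using hsvar_one[OF n] by simp
qed

lemma phi_mult:
  assumes n: "enat n \<le> m"
  shows "hsh m (\<Sum>i\<le>n. hsvar (n - i) (\<Sum>j\<le>i. (x::nat \<Rightarrow> 'k::comm_ring_1) j * y (i - j))) =
         hsh m (\<Sum>s\<le>n. (\<Sum>i\<le>s. hsvar (s - i) (x i)) * (\<Sum>i\<le>n - s. hsvar (n - s - i) (y i)))"
proof -
  define ff where "ff j l t = hsvar l (x j) * hsvar (n - j - l - t) (y t)" for j l t
  have ffc: "ff j l t \<in> carrier (hs_poly_ring m)" if "l \<le> n" for j l t
    unfolding ff_def using that n
    by (intro hs_mult_closed hsvar_closed) (auto intro: enat_le_trans enat_le_trans')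
  have step: "hsh m (hsvar (n - i) (\<Sum>j\<le>i. x j * y (i - j))) = hsh m (\<Sum>j\<le>i. \<Sum>l\<le>n - i. ff j l (i - j))"
    if i: "i \<le> n" for i
  proof -
    have ni: "enat (n - i) \<le> m" using n by (rule enat_le_trans')
    have "hsh m (hsvar (n - i) (\<Sum>j\<le>i. x j * y (i - j))) = hsh m (\<Sum>j\<le>i. hsvar (n - i) (x j * y (i - j)))"
      using ni by (rule hsvar_sum[OF finite_atMost])
    also have "\<dots> = hsh m (\<Sum>j\<le>i. \<Sum>l\<le>n - i. hsvar l (x j) * hsvar (n - i - l) (y (i - j)))"
    proof (rule hsh_sum_cong)
      fix j assume "j \<in> {..i}"
      show "hsvar (n - i) (x j * y (i - j)) \<in> carrier (hs_poly_ring m)" using ni by (rule hsvar_closed)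
      show "(\<Sum>l\<le>n - i. hsvar l (x j) * hsvar (n - i - l) (y (i - j))) \<in> carrier (hs_poly_ring m)"
        using ni n by (intro hs_sum_closed hs_mult_closed hsvar_closed) (auto intro: enat_le_trans enat_le_trans')
      show "hsh m (hsvar (n - i) (x j * y (i - j))) = hsh m (\<Sum>l\<le>n - i. hsvar l (x j) * hsvar (n - i - l) (y (i - j)))"
        using ni by (rule hsvar_mult)
    qed simp
    also have "(\<Sum>j\<le>i. \<Sum>l\<le>n - i. hsvar l (x j) * hsvar (n - i - l) (y (i - j))) =
               (\<Sum>j\<le>i. \<Sum>l\<le>n - i. ff j l (i - j))"
    proof (intro sum.cong refl)
      fix j l assume "j \<in> {..i}" "l \<in> {..n - i}"
      then have "n - j - l - (i - j) = n - i - l" by auto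
      then show "hsvar l (x j) * hsvar (n - i - l) (y (i - j)) = ff j l (i - j)"
        by (simp add: ff_def)
    qed
    finally show ?thesis .
  qed
  have "hsh m (\<Sum>i\<le>n. hsvar (n - i) (\<Sum>j\<le>i. x j * y (i - j))) =
        hsh m (\<Sum>i\<le>n. \<Sum>j\<le>i. \<Sum>l\<le>n - i. ff j l (i - j))"
  proof (rule hsh_sum_cong)
    fix i assume i: "i \<in> {..n}"
    show "hsvar (n - i) (\<Sum>j\<le>i. x j * y (i - j)) \<in> carrier (hs_poly_ring m)"
      using n by (intro hsvar_closed enat_le_trans')
    show "(\<Sum>j\<le>i. \<Sum>l\<le>n - i. ff j l (i - j)) \<in> carrier (hs_poly_ring m)"
      by (intro hs_sum_closed ffc) auto
    show "hsh m (hsvar (n - i) (\<Sum>j\<le>i. x j * y (i - j))) = hsh m (\<Sum>j\<le>i. \<Sum>l\<le>n - i. ff j l (i - j))"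
      using i by (intro step) simp
  qed simp
  also have "(\<Sum>i\<le>n. \<Sum>j\<le>i. \<Sum>l\<le>n - i. ff j l (i - j)) = (\<Sum>s\<le>n. \<Sum>j\<le>s. \<Sum>t\<le>n - s. ff j (s - j) t)"
    by (rule triple_sum[symmetric])
  also have "\<dots> = (\<Sum>s\<le>n. (\<Sum>i\<le>s. hsvar (s - i) (x i)) * (\<Sum>i\<le>n - s. hsvar (n - s - i) (y i)))"
  proof (intro sum.cong refl)
    fix s assume s: "s \<in> {..n}"
    have "(\<Sum>j\<le>s. \<Sum>t\<le>n - s. ff j (s - j) t) = (\<Sum>j\<le>s. \<Sum>t\<le>n - s. hsvar (s - j) (x j) * hsvar (n - s - t) (y t))"
    proof (intro sum.cong refl)
      fix j t assume "j \<in> {..s}" "t \<in> {..n - s}"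
      then have "n - j - (s - j) - t = n - s - t" by auto
      then show "ff j (s - j) t = hsvar (s - j) (x j) * hsvar (n - s - t) (y t)" by (simp add: ff_def)
    qed
    also have "\<dots> = (\<Sum>i\<le>s. hsvar (s - i) (x i)) * (\<Sum>i\<le>n - s. hsvar (n - s - i) (y i))"
      by (simp add: sum_product)
    finally show "(\<Sum>j\<le>s. \<Sum>t\<le>n - s. ff j (s - j) t) = (\<Sum>i\<le>s. hsvar (s - i) (x i)) * (\<Sum>i\<le>n - s. hsvar (n - s - i) (y i))" .
  qed
  finally show ?thesis .
qed

lemma one_case: "enat n \<le> m \<Longrightarrow> hs_phi m \<one>\<^bsub>trunc_ps (tcring::'k::comm_ring_1 ring) m\<^esub> n = \<one>\<^bsub>trunc_ps (HS m :: 'k hs_poly set ring) m\<^esub> n"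
  by (simp add: phi_val trunc_ps_simps phi_one cong: if_cong)

theorem proposition6p4:
  fixes p :: nat and m :: enat
  assumes "Factorial_Ring.prime p" and "of_nat p = (0 :: 'k :: comm_ring_1)"
  shows "(hs_phi m :: (nat \<Rightarrow> 'k) \<Rightarrow> _)
           \<in> ring_hom (trunc_ps (tcring :: 'k ring) m) (trunc_ps (HS m :: 'k hs_poly set ring) m)"
proof -
  interpret S: cring "HS m :: 'k hs_poly set ring" by (rule HS_cring)
  define A where "A = (\<lambda>(x::nat \<Rightarrow> 'k) n. (\<Sum>i\<le>n. hsvar (n - i) (x i)))"
  have Ac: "enat n \<le> m \<Longrightarrow> A x n \<in> carrier (hs_poly_ring m)" for x n
    unfolding A_def by (rule A_closed)
  have pv: "enat n \<le> m \<Longrightarrow> hs_phi m x n = hsh m (A x n)" for x :: "nat \<Rightarrow> 'k" and n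
    unfolding A_def by (rule phi_val)
  show ?thesis
  proof (rule ring_hom_memI)
    fix x :: "nat \<Rightarrow> 'k"
    show "hs_phi m x \<in> carrier (trunc_ps (HS m) m)"
      unfolding trunc_ps_simps
    proof (intro CollectI conjI allI impI)
      fix n
      show "hs_phi m x n \<in> carrier (HS m)"
      proof (cases "enat n \<le> m")
        case True
        then show ?thesis using pv[OF True] hsh_carrier[OF Ac[OF True]] by simp
      next
        case False
        then show ?thesis using phi_out[OF False, of x] S.zero_closed by simp
      qed
    next
      fix n assume "\<not> enat n \<le> m"
      then show "hs_phi m x n = \<zero>\<^bsub>HS m\<^esub>" by (simp add: phi_out)
    qed
  next
    fix x y :: "nat \<Rightarrow> 'k"
    show "hs_phi m (x \<otimes>\<^bsub>trunc_ps tcring m\<^esub> y) = hs_phi m x \<otimes>\<^bsub>trunc_ps (HS m) m\<^esub> hs_phi m y"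
    proof
      fix n
      show "hs_phi m (x \<otimes>\<^bsub>trunc_ps tcring m\<^esub> y) n = (hs_phi m x \<otimes>\<^bsub>trunc_ps (HS m) m\<^esub> hs_phi m y) n"
      proof (cases "enat n \<le> m")
        case False
        then show ?thesis by (simp add: trunc_ps_simps phi_out)
      next
        case n: True
        have "hs_phi m (x \<otimes>\<^bsub>trunc_ps tcring m\<^esub> y) n =
              hsh m (\<Sum>i\<le>n. hsvar (n - i) (\<Sum>j\<le>i. x j * y (i - j)))"
          unfolding phi_val[OF n] trunc_ps_simps
          by (intro arg_cong[where f="hsh m"] sum.cong refl)
             (use n in \<open>auto simp: tc_finsum enat_le_trans\<close>)
        also have "\<dots> = hsh m (\<Sum>s\<le>n. A x s * A y (n - s))"
          unfolding A_def by (rule phi_mult[OF n])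
        also have "\<dots> = (\<Oplus>\<^bsub>HS m\<^esub> s\<in>{..n}. hsh m (A x s * A y (n - s)))"
        proof (rule hsh_sum)
          fix s assume "s \<in> {..n}"
          then have "enat s \<le> m" "enat (n - s) \<le> m"
            using n enat_le_trans enat_le_trans' by auto
          then show "A x s * A y (n - s) \<in> carrier (hs_poly_ring m)"
            by (intro hs_mult_closed Ac)
        qed simp
        also have "\<dots> = (\<Oplus>\<^bsub>HS m\<^esub> s\<in>{..n}. hs_phi m x s \<otimes>\<^bsub>HS m\<^esub> hs_phi m y (n - s))"
        proof (rule S.finsum_cong')
          show "{..n} = {..n}" by simp
          have "enat s \<le> m" "enat (n - s) \<le> m" if "s \<le> n" for s
            using that n enat_le_trans enat_le_trans' by blast+
          then show "(\<lambda>s. hs_phi m x s \<otimes>\<^bsub>HS m\<^esub> hs_phi m y (n - s)) \<in> {..n} \<rightarrow> carrier (HS m)"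
            by (auto simp: pv hsh_carrier Ac)
          fix s assume "s \<in> {..n}"
          then have "enat s \<le> m" "enat (n - s) \<le> m"
            using n enat_le_trans enat_le_trans' by auto
          then show "hsh m (A x s * A y (n - s)) = hs_phi m x s \<otimes>\<^bsub>HS m\<^esub> hs_phi m y (n - s)"
            by (simp add: pv hsh_mult Ac)
        qed
        also have "\<dots> = (hs_phi m x \<otimes>\<^bsub>trunc_ps (HS m) m\<^esub> hs_phi m y) n"
          using n by (simp add: trunc_ps_simps)
        finally show ?thesis .
      qed
    qed
  next
    fix x y :: "nat \<Rightarrow> 'k"
    show "hs_phi m (x \<oplus>\<^bsub>trunc_ps tcring m\<^esub> y) = hs_phi m x \<oplus>\<^bsub>trunc_ps (HS m) m\<^esub> hs_phi m y"
    proof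
      fix n
      show "hs_phi m (x \<oplus>\<^bsub>trunc_ps tcring m\<^esub> y) n = (hs_phi m x \<oplus>\<^bsub>trunc_ps (HS m) m\<^esub> hs_phi m y) n"
      proof (cases "enat n \<le> m")
        case False
        then show ?thesis by (simp add: trunc_ps_simps phi_out)
      next
        case n: True
        have "hs_phi m (x \<oplus>\<^bsub>trunc_ps tcring m\<^esub> y) n =
              hsh m (\<Sum>i\<le>n. hsvar (n - i) (x i + y i))"
          unfolding phi_val[OF n] trunc_ps_simps
          by (intro arg_cong[where f="hsh m"] sum.cong refl)
             (use n in \<open>auto simp: enat_le_trans\<close>)
        also have "\<dots> = hs_phi m x n \<oplus>\<^bsub>HS m\<^esub> hs_phi m y n"
          unfolding phi_val[OF n] by (rule phi_add[OF n])
        also have "\<dots> = (hs_phi m x \<oplus>\<^bsub>trunc_ps (HS m) m\<^esub> hs_phi m y) n"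
          using n by (simp add: trunc_ps_simps)
        finally show ?thesis .
      qed
    qed
  next
    show "hs_phi m \<one>\<^bsub>trunc_ps tcring m\<^esub> = \<one>\<^bsub>trunc_ps (HS m) m\<^esub>"
    proof
      fix n
      show "hs_phi m \<one>\<^bsub>trunc_ps tcring m\<^esub> n = \<one>\<^bsub>trunc_ps (HS m) m\<^esub> n"
      proof (cases "enat n \<le> m")
        case False
        then have "n \<noteq> 0" using zero_le[of m] by (metis zero_enat_def)
        with False show ?thesis by (simp add: trunc_ps_simps phi_out)
      next
        case n: True
        show ?thesis using n by (rule one_case)
      qed
    qed
  qed
qed

end
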